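(* Let $A$ be a $\Bbbk$-algebra, $P$ a well-ordered partial semigroup, and $\nu_0:A\setminus\{0\}\to P$ an injective valuation with $\nu_0(A\setminus\{0\})=P$. Let $I\subseteq A$ be a two-sided ideal and put $J:=\nu_0(I\setminus\{0\})$. Then $J$ is an ideal of $P$, so $P\setminus J$ is a partial semigroup under $\circ_J$ (ordered by the restriction of the order of $P$). For $a\in A\setminus I$ put $\nu(a+I):=\min\{\nu_0(a+f):f\in I\}$. Then $\nu:(A/I)\setminus\{0\}\to P\setminus J$ is a surjective injective valuation, and $\nu(a+I)=\nu_0(a)$ whenever $\nu_0(a)\notin J$.
   Context: A partial semigroup is a set $P$ with a partially defined binary operation $\circ$ such that for all $c,c',c''$: $c\circ c'$ and $(c\circ c')\circ c''$ are defined iff $c'\circ c''$ and $c\circ(c'\circ c'')$ are defined, and then they are equal. It is ordered if it carries a linear order $\preceq$ such that $c\preceq d$, $c'\preceq d'$ imply $c\circ c'\preceq d\circ d'$ whenever both compositions are defined; well-ordered if this order is a well-order. A subset $J\subseteq P$ is an ideal if $c\circ d\in J$ and $d\circ c\in J$ for all $c\in P$, $d\in J$ whenever these compositions are defined; then on $P\setminus J$ one defines $c\circ_J d:=c\circ d$ whenever $c\circ d$ is defined and lies in $P\setminus J$ (undefined otherwise). A valuation of a $\Bbbk$-algebra $A$ into an ordered partial semigroup $P$ is a map $\nu:A\setminus\{0\}\to P$ with (i) $\nu(\lambda a)=\nu(a)$ for $\lambda\in\Bbbk^\times$; (ii) $\nu(a+b)\preceq\max(\nu(a),\nu(b))$ when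 $a+b\ne0$; (iii) if $\nu(a)\circ\nu(b)$ is defined then $ab\neq0$ and $\nu(ab)=\nu(a)\circ\nu(b)$. It is injective if there is a basis $\mathbf B$ of $A$ with $\nu|_{\mathbf B}$ injective. *)

theory Defs
  imports Main "HOL.Vector_Spaces"
begin

definition k_algebra :: "('k::field \<Rightarrow> 'a::ring_1 \<Rightarrow> 'a) \<Rightarrow> bool" where
  "k_algebra scale \<longleftrightarrow> module scale \<and>
     (\<forall>c x y. scale c (x * y) = scale c x * y \<and> scale c (x * y) = x * scale c y)"

definition two_sided_ideal :: "('k::field \<Rightarrow> 'a::ring_1 \<Rightarrow> 'a) \<Rightarrow> 'a set \<Rightarrow> bool" where
  "two_sided_ideal scale I \<longleftrightarrow> 0 \<in> I \<and>
     (\<forall>x\<in>I. \<forall>y\<in>I. x + y \<in> I) \<and>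
     (\<forall>c. \<forall>x\<in>I. scale c x \<in> I) \<and>
     (\<forall>a. \<forall>x\<in>I. a * x \<in> I \<and> x * a \<in> I)"

text \<open>The associativity condition with Option.bind says exactly: (c o c') o c'' is
  defined iff c o (c' o c'') is defined, and then they are equal.\<close>
definition partial_semigroup :: "'p set \<Rightarrow> ('p \<Rightarrow> 'p \<Rightarrow> 'p option) \<Rightarrow> bool" where
  "partial_semigroup P ps_op \<longleftrightarrow>
     (\<forall>c\<in>P. \<forall>d\<in>P. \<forall>e. ps_op c d = Some e \<longrightarrow> e \<in> P) \<and>
     (\<forall>c\<in>P. \<forall>c'\<in>P. \<forall>c''\<in>P.
        Option.bind (ps_op c c') (\<lambda>x. ps_op x c'') = Option.bind (ps_op c' c'') (\<lambda>y. ps_op c y))"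

definition ordered_partial_semigroup ::
  "'p set \<Rightarrow> ('p \<Rightarrow> 'p \<Rightarrow> 'p option) \<Rightarrow> ('p \<times> 'p) set \<Rightarrow> bool" where
  "ordered_partial_semigroup P ps_op r \<longleftrightarrow> partial_semigroup P ps_op \<and> linear_order_on P r \<and>
     (\<forall>c d c' d' x y. (c, d) \<in> r \<longrightarrow> (c', d') \<in> r \<longrightarrow> ps_op c c' = Some x \<longrightarrow> ps_op d d' = Some y
        \<longrightarrow> (x, y) \<in> r)"

definition well_ordered_partial_semigroup ::
  "'p set \<Rightarrow> ('p \<Rightarrow> 'p \<Rightarrow> 'p option) \<Rightarrow> ('p \<times> 'p) set \<Rightarrow> bool" where
  "well_ordered_partial_semigroup P ps_op r \<longleftrightarrow>
     ordered_partial_semigroup P ps_op r \<and> well_order_on P r"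

definition ps_ideal :: "'p set \<Rightarrow> ('p \<Rightarrow> 'p \<Rightarrow> 'p option) \<Rightarrow> 'p set \<Rightarrow> bool" where
  "ps_ideal P ps_op J \<longleftrightarrow> J \<subseteq> P \<and>
     (\<forall>c\<in>P. \<forall>d\<in>J. \<forall>x. (ps_op c d = Some x \<longrightarrow> x \<in> J) \<and> (ps_op d c = Some x \<longrightarrow> x \<in> J))"

definition comp_J :: "'p set \<Rightarrow> ('p \<Rightarrow> 'p \<Rightarrow> 'p option) \<Rightarrow> 'p \<Rightarrow> 'p \<Rightarrow> 'p option" where
  "comp_J J ps_op c d = (case ps_op c d of None \<Rightarrow> None | Some x \<Rightarrow> if x \<in> J then None else Some x)"

definition max_r :: "('p \<times> 'p) set \<Rightarrow> 'p \<Rightarrow> 'p \<Rightarrow> 'p" where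
  "max_r r x y = (if (x, y) \<in> r then y else x)"

definition min_r :: "('p \<times> 'p) set \<Rightarrow> 'p set \<Rightarrow> 'p" where
  "min_r r S = (THE m. m \<in> S \<and> (\<forall>x\<in>S. (m, x) \<in> r))"

text \<open>Valuation of the k-algebra A (carrier: all of 'a) into the ordered partial
  semigroup (P, ps_op, r). Only values on A \ {0} matter.\<close>
definition valuation ::
  "('k::field \<Rightarrow> 'a::ring_1 \<Rightarrow> 'a) \<Rightarrow> 'p set \<Rightarrow> ('p \<Rightarrow> 'p \<Rightarrow> 'p option) \<Rightarrow> ('p \<times> 'p) set
     \<Rightarrow> ('a \<Rightarrow> 'p) \<Rightarrow> bool" where
  "valuation scale P ps_op r \<nu> \<longleftrightarrow>
     (\<forall>a. a \<noteq> 0 \<longrightarrow> \<nu> a \<in> P) \<and>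
     (\<forall>c a. c \<noteq> 0 \<longrightarrow> a \<noteq> 0 \<longrightarrow> \<nu> (scale c a) = \<nu> a) \<and>
     (\<forall>a b. a \<noteq> 0 \<longrightarrow> b \<noteq> 0 \<longrightarrow> a + b \<noteq> 0 \<longrightarrow> (\<nu> (a + b), max_r r (\<nu> a) (\<nu> b)) \<in> r) \<and>
     (\<forall>a b x. a \<noteq> 0 \<longrightarrow> b \<noteq> 0 \<longrightarrow> ps_op (\<nu> a) (\<nu> b) = Some x \<longrightarrow> a * b \<noteq> 0 \<and> \<nu> (a * b) = x)"

definition injective_valuation ::
  "('k::field \<Rightarrow> 'a::ring_1 \<Rightarrow> 'a) \<Rightarrow> 'p set \<Rightarrow> ('p \<Rightarrow> 'p \<Rightarrow> 'p option) \<Rightarrow> ('p \<times> 'p) set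
     \<Rightarrow> ('a \<Rightarrow> 'p) \<Rightarrow> bool" where
  "injective_valuation scale P ps_op r \<nu> \<longleftrightarrow> valuation scale P ps_op r \<nu> \<and>
     (\<exists>B. module.independent scale B \<and> module.span scale B = UNIV \<and> inj_on \<nu> B)"

text \<open>Valuations of the quotient algebra A/I, expressed through representatives:
  the element a + I of A/I is nonzero iff a \<notin> I, the operations of A/I are induced
  from A, and a map \<nu> : (A/I) \ {0} \<rightarrow> P is given as a map on A \ I that is
  constant on cosets (\<nu>(a + I) := \<nu> a).\<close>
definition quotient_valuation ::
  "('k::field \<Rightarrow> 'a::ring_1 \<Rightarrow> 'a) \<Rightarrow> 'a set \<Rightarrow> 'p set \<Rightarrow> ('p \<Rightarrow> 'p \<Rightarrow> 'p option)
     \<Rightarrow> ('p \<times> 'p) set \<Rightarrow> ('a \<Rightarrow> 'p) \<Rightarrow> bool" where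
  "quotient_valuation scale I P ps_op r \<nu> \<longleftrightarrow>
     (\<forall>a b. a \<notin> I \<longrightarrow> a - b \<in> I \<longrightarrow> \<nu> a = \<nu> b) \<and>
     (\<forall>a. a \<notin> I \<longrightarrow> \<nu> a \<in> P) \<and>
     (\<forall>c a. c \<noteq> 0 \<longrightarrow> a \<notin> I \<longrightarrow> \<nu> (scale c a) = \<nu> a) \<and>
     (\<forall>a b. a \<notin> I \<longrightarrow> b \<notin> I \<longrightarrow> a + b \<notin> I \<longrightarrow> (\<nu> (a + b), max_r r (\<nu> a) (\<nu> b)) \<in> r) \<and>
     (\<forall>a b x. a \<notin> I \<longrightarrow> b \<notin> I \<longrightarrow> ps_op (\<nu> a) (\<nu> b) = Some x \<longrightarrow> a * b \<notin> I \<and> \<nu> (a * b) = x)"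

text \<open>A basis of A/I is given by a set B \<subseteq> A of representatives with pairwise distinct
  cosets whose cosets are linearly independent in A/I and span A/I.\<close>
definition quotient_basis :: "('k::field \<Rightarrow> 'a::ring_1 \<Rightarrow> 'a) \<Rightarrow> 'a set \<Rightarrow> 'a set \<Rightarrow> bool" where
  "quotient_basis scale I B \<longleftrightarrow>
     (\<forall>b\<in>B. \<forall>b'\<in>B. b - b' \<in> I \<longrightarrow> b = b') \<and>
     (\<forall>S u. finite S \<longrightarrow> S \<subseteq> B \<longrightarrow> (\<Sum>b\<in>S. scale (u b) b) \<in> I \<longrightarrow> (\<forall>b\<in>S. u b = 0)) \<and>
     (\<forall>a. \<exists>S u. finite S \<and> S \<subseteq> B \<and> a - (\<Sum>b\<in>S. scale (u b) b) \<in> I)"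

definition injective_quotient_valuation ::
  "('k::field \<Rightarrow> 'a::ring_1 \<Rightarrow> 'a) \<Rightarrow> 'a set \<Rightarrow> 'p set \<Rightarrow> ('p \<Rightarrow> 'p \<Rightarrow> 'p option)
     \<Rightarrow> ('p \<times> 'p) set \<Rightarrow> ('a \<Rightarrow> 'p) \<Rightarrow> bool" where
  "injective_quotient_valuation scale I P ps_op r \<nu> \<longleftrightarrow> quotient_valuation scale I P ps_op r \<nu> \<and>
     (\<exists>B. quotient_basis scale I B \<and> inj_on \<nu> B)"

end

theory Submission
  imports Defs
begin

locale QS =
  fixes scale :: "'k::field \<Rightarrow> 'a::ring_1 \<Rightarrow> 'a"
    and P :: "'p set" and ps_op :: "'p \<Rightarrow> 'p \<Rightarrow> 'p option" and r :: "('p \<times> 'p) set"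
    and \<nu>0 :: "'a \<Rightarrow> 'p" and I :: "'a set"
  assumes alg: "k_algebra scale"
    and P_wo: "well_ordered_partial_semigroup P ps_op r"
    and val: "injective_valuation scale P ps_op r \<nu>0"
    and surj: "\<nu>0 ` (UNIV - {0}) = P"
    and ideal: "two_sided_ideal scale I"
begin

lemma vs: "vector_space scale" using alg by (simp add: k_algebra_def module_iff_vector_space)

sublocale V: vector_space scale by (rule vs)

lemma ops: "ordered_partial_semigroup P ps_op r" using P_wo by (simp add: well_ordered_partial_semigroup_def)
lemma wo: "well_order_on P r" using P_wo by (simp add: well_ordered_partial_semigroup_def)
lemma lin: "linear_order_on P r" using wo by (simp add: well_order_on_def)
lemma r_sub: "r \<subseteq> P \<times> P" using lin by (simp add: order_on_defs)
lemma r_refl: "x \<in> P \<Longrightarrow> (x, x) \<in> r" using lin by (simp add: order_on_defs refl_on_def)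
lemma r_trans: "(x, y) \<in> r \<Longrightarrow> (y, z) \<in> r \<Longrightarrow> (x, z) \<in> r" using lin
  unfolding order_on_defs trans_def by blast
lemma r_antisym: "(x, y) \<in> r \<Longrightarrow> (y, x) \<in> r \<Longrightarrow> x = y" using lin
  unfolding order_on_defs antisym_def by blast
lemma r_tot: "total_on P r" using lin by (simp add: order_on_defs)
lemma r_total: "x \<in> P \<Longrightarrow> y \<in> P \<Longrightarrow> (x, y) \<in> r \<or> (y, x) \<in> r"
  using r_tot r_refl unfolding total_on_def by (cases "x = y") auto
lemma r_wf: "wf (r - Id)" using wo by (simp add: well_order_on_def)
lemma r_P: "(x, y) \<in> r \<Longrightarrow> x \<in> P \<and> y \<in> P" using r_sub by blast

lemma vl: "valuation scale P ps_op r \<nu>0" using val by (simp add: injective_valuation_def)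
lemma v_P: "a \<noteq> 0 \<Longrightarrow> \<nu>0 a \<in> P" using vl by (simp add: valuation_def)
lemma v_scale: "c \<noteq> 0 \<Longrightarrow> a \<noteq> 0 \<Longrightarrow> \<nu>0 (scale c a) = \<nu>0 a" using vl by (simp add: valuation_def)
lemma v_add: "a \<noteq> 0 \<Longrightarrow> b \<noteq> 0 \<Longrightarrow> a + b \<noteq> 0 \<Longrightarrow> (\<nu>0 (a + b), max_r r (\<nu>0 a) (\<nu>0 b)) \<in> r"
  using vl by (simp add: valuation_def)
lemma v_mult: "a \<noteq> 0 \<Longrightarrow> b \<noteq> 0 \<Longrightarrow> ps_op (\<nu>0 a) (\<nu>0 b) = Some x \<Longrightarrow> a * b \<noteq> 0 \<and> \<nu>0 (a * b) = x"
  using vl by (simp add: valuation_def)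
lemma v_neg: "a \<noteq> 0 \<Longrightarrow> \<nu>0 (- a) = \<nu>0 a"
  using v_scale[of "-1" a] by simp

lemma max_r_cases: "max_r r x y = x \<or> max_r r x y = y" by (simp add: max_r_def)
lemma max_r_ge: "x \<in> P \<Longrightarrow> y \<in> P \<Longrightarrow> (x, max_r r x y) \<in> r \<and> (y, max_r r x y) \<in> r"
  using r_total r_refl by (auto simp: max_r_def)

lemma SU: assumes "a \<noteq> 0" "b \<noteq> 0" "(\<nu>0 a, \<nu>0 b) \<in> r" "\<nu>0 a \<noteq> \<nu>0 b"
  shows "a + b \<noteq> 0 \<and> \<nu>0 (a + b) = \<nu>0 b"
proof -
  have ab: "a + b \<noteq> 0"
  proof
    assume "a + b = 0" then have "b = - a" by (simp add: eq_neg_iff_add_eq_0 add.commute)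
    then show False using assms v_neg by simp
  qed
  have m: "max_r r (\<nu>0 a) (\<nu>0 b) = \<nu>0 b" using assms by (simp add: max_r_def)
  have 1: "(\<nu>0 (a + b), \<nu>0 b) \<in> r" using v_add[OF assms(1,2) ab] m by simp
  have e: "(a + b) + (- a) = b" by (simp add: algebra_simps)
  have na: "- a \<noteq> 0" using assms(1) by simp
  have "(\<nu>0 ((a + b) + (- a)), max_r r (\<nu>0 (a+b)) (\<nu>0 (- a))) \<in> r"
    using v_add[OF ab na] e assms(2) by simp
  then have 2: "(\<nu>0 b, max_r r (\<nu>0 (a+b)) (\<nu>0 a)) \<in> r"
    using e v_neg[OF assms(1)] by simp
  show ?thesis
  proof (cases "(\<nu>0 (a+b), \<nu>0 a) \<in> r")
    case True
    then have "(\<nu>0 b, \<nu>0 a) \<in> r" using 2 by (simp add: max_r_def)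
    then show ?thesis using assms r_antisym by blast
  next
    case False
    then have "(\<nu>0 b, \<nu>0 (a+b)) \<in> r" using 2 by (simp add: max_r_def)
    then show ?thesis using 1 ab r_antisym by blast
  qed
qed

definition sm :: "'p \<Rightarrow> 'a \<Rightarrow> bool" where
  "sm p x \<longleftrightarrow> x = 0 \<or> ((\<nu>0 x, p) \<in> r \<and> \<nu>0 x \<noteq> p)"

lemma sm_add: assumes "sm p x" "sm p y" shows "sm p (x + y)"
proof -
  { assume x: "x \<noteq> 0" and y: "y \<noteq> 0" and xy: "x + y \<noteq> 0"
    have xp: "(\<nu>0 x, p) \<in> r" "\<nu>0 x \<noteq> p" and yp: "(\<nu>0 y, p) \<in> r" "\<nu>0 y \<noteq> p"
      using assms x y by (auto simp: sm_def)
    have mp: "(max_r r (\<nu>0 x) (\<nu>0 y), p) \<in> r" "max_r r (\<nu>0 x) (\<nu>0 y) \<noteq> p"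
      using xp yp max_r_cases[of "\<nu>0 x" "\<nu>0 y"] by auto
    have v: "(\<nu>0 (x + y), max_r r (\<nu>0 x) (\<nu>0 y)) \<in> r" using v_add[OF x y xy] .
    have "(\<nu>0 (x+y), p) \<in> r" using r_trans[OF v mp(1)] .
    moreover have "\<nu>0 (x+y) \<noteq> p" using v mp r_antisym by blast
    ultimately have ?thesis by (simp add: sm_def) }
  then show ?thesis using assms by (cases "x = 0"; cases "y = 0"; auto simp: sm_def)
qed

lemma sm_scale: "sm p x \<Longrightarrow> sm p (scale c x)"
  by (cases "c = 0"; cases "x = 0") (auto simp: sm_def v_scale)

lemma sm_neg: "sm p x \<Longrightarrow> sm p (- x)"
  using sm_scale[of p x "-1"] by simp

lemma sm_diff: "sm p x \<Longrightarrow> sm p y \<Longrightarrow> sm p (x - y)"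
  using sm_add[of p x "-y"] sm_neg by simp

lemma sm_sum: "finite S \<Longrightarrow> (\<forall>x\<in>S. sm p (f x)) \<Longrightarrow> sm p (sum f S)"
proof (induction S rule: finite_induct)
  case empty show ?case by (simp add: sm_def)
next
  case (insert x F) then show ?case by (simp add: sm_add)
qed

lemma lead: assumes "finite t" "m \<in> t" "g m \<noteq> 0" "\<forall>a\<in>t - {m}. sm (\<nu>0 (g m)) (g a)"
  shows "sum g t \<noteq> 0 \<and> \<nu>0 (sum g t) = \<nu>0 (g m) \<and> sm (\<nu>0 (g m)) (sum g t - g m)"
proof -
  have eq: "sum g t = sum g (t - {m}) + g m" using assms(1,2) by (simp add: sum.remove add.commute)
  have R: "sm (\<nu>0 (g m)) (sum g (t - {m}))" using assms by (intro sm_sum) auto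
  show ?thesis
  proof (cases "sum g (t - {m}) = 0")
    case True then show ?thesis using eq assms by (simp add: sm_def)
  next
    case False
    then have "(\<nu>0 (sum g (t - {m})), \<nu>0 (g m)) \<in> r" "\<nu>0 (sum g (t - {m})) \<noteq> \<nu>0 (g m)"
      using R by (auto simp: sm_def)
    from SU[OF False assms(3) this] show ?thesis using eq R by simp
  qed
qed

lemma maxex: "finite S \<Longrightarrow> S \<noteq> {} \<Longrightarrow> (\<forall>x\<in>S. h x \<in> P) \<Longrightarrow> \<exists>m\<in>S. \<forall>x\<in>S. (h x, h m) \<in> r"
proof (induction S rule: finite_ne_induct)
  case (singleton x) then show ?case using r_refl by auto
next
  case (insert x F)
  then obtain m where m: "m \<in> F" "\<forall>y\<in>F. (h y, h m) \<in> r" by auto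
  show ?case
  proof (cases "(h x, h m) \<in> r")
    case True then show ?thesis using m by auto
  next
    case False
    then have "(h m, h x) \<in> r" using r_total insert.prems m by auto
    then show ?thesis using m r_trans r_refl insert.prems by blast
  qed
qed

lemma minr: assumes "S \<subseteq> P" "S \<noteq> {}" shows "min_r r S \<in> S \<and> (\<forall>x\<in>S. (min_r r S, x) \<in> r)"
proof -
  obtain x where "x \<in> S" using assms by auto
  then obtain z where z: "z \<in> S" "\<And>y. (y, z) \<in> r - Id \<Longrightarrow> y \<notin> S"
    using wfE_min[OF r_wf \<open>x \<in> S\<close>] by blast
  have zl: "\<forall>x\<in>S. (z, x) \<in> r"
  proof
    fix y assume "y \<in> S"
    then show "(z, y) \<in> r" using z r_total[of z y] assms r_refl by (cases "y = z") auto
  qed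
  have "min_r r S = z" unfolding min_r_def
    by (rule the_equality) (use z zl r_antisym in auto)
  then show ?thesis using z zl by simp
qed

definition B0 where "B0 = (SOME B. V.span B = UNIV \<and> inj_on \<nu>0 B)"

lemma B0: "V.span B0 = UNIV" "inj_on \<nu>0 B0"
proof -
  have "\<exists>B. V.span B = UNIV \<and> inj_on \<nu>0 B"
    using val unfolding injective_valuation_def by blast
  then have "V.span B0 = UNIV \<and> inj_on \<nu>0 B0" unfolding B0_def by (rule someI_ex)
  then show "V.span B0 = UNIV" "inj_on \<nu>0 B0" by auto
qed

lemma D: assumes "x \<noteq> 0"
  shows "\<exists>e \<mu>. e \<in> B0 \<and> e \<noteq> 0 \<and> \<nu>0 x = \<nu>0 e \<and> sm (\<nu>0 e) (x - scale \<mu> e)"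
proof -
  have "x \<in> V.span B0" using B0 by simp
  then obtain t u where t: "finite t" "t \<subseteq> B0" and x: "x = (\<Sum>a\<in>t. scale (u a) a)"
    unfolding V.span_explicit by blast
  define t' where "t' = {a\<in>t. scale (u a) a \<noteq> 0}"
  have ft': "finite t'" using t by (simp add: t'_def)
  have ne: "t' \<noteq> {}"
  proof
    assume "t' = {}"
    then have h: "\<forall>a\<in>t. scale (u a) a = 0" by (auto simp: t'_def)
    have "x = 0" unfolding x using h by (intro sum.neutral) blast
    then show False using assms by simp
  qed
  have nz: "\<forall>a\<in>t'. a \<noteq> 0 \<and> u a \<noteq> 0" by (auto simp: t'_def)
  obtain m where m: "m \<in> t'" "\<forall>a\<in>t'. (\<nu>0 a, \<nu>0 m) \<in> r"
    using maxex[OF ft' ne, of \<nu>0] nz v_P by blast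
  have vm: "\<nu>0 (scale (u m) m) = \<nu>0 m" using nz m v_scale by blast
  have mt: "m \<in> t" using m by (simp add: t'_def)
  have "\<forall>a\<in>t - {m}. sm (\<nu>0 (scale (u m) m)) (scale (u a) a)"
  proof
    fix a assume a: "a \<in> t - {m}"
    show "sm (\<nu>0 (scale (u m) m)) (scale (u a) a)"
    proof (cases "a \<in> t'")
      case False then show ?thesis using a by (simp add: t'_def sm_def)
    next
      case True
      have "\<nu>0 a \<noteq> \<nu>0 m" proof
        assume "\<nu>0 a = \<nu>0 m"
        then have "a = m" by (rule inj_onD[OF B0(2)]) (use a mt t(2) in auto)
        then show False using a by blast
      qed
      then show ?thesis using True m nz vm v_scale by (simp add: sm_def)
    qed
  qed
  from lead[OF t(1) mt, of "\<lambda>a. scale (u a) a"] this nz m(1)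
  have "\<nu>0 x = \<nu>0 m" "sm (\<nu>0 m) (x - scale (u m) m)" using x vm by auto
  then show ?thesis using nz m(1) mt t(2) by blast
qed

lemma L2: assumes "a \<noteq> 0" "c \<noteq> 0" "\<nu>0 a = \<nu>0 c"
  shows "\<exists>l. sm (\<nu>0 a) (a - scale l c)"
proof -
  obtain e1 \<mu>1 where 1: "e1 \<in> B0" "e1 \<noteq> 0" "\<nu>0 a = \<nu>0 e1" "sm (\<nu>0 e1) (a - scale \<mu>1 e1)" using D[OF assms(1)] by blast
  obtain e2 \<mu>2 where 2: "e2 \<in> B0" "e2 \<noteq> 0" "\<nu>0 c = \<nu>0 e2" "sm (\<nu>0 e2) (c - scale \<mu>2 e2)" using D[OF assms(2)] by blast
  have e: "e1 = e2" by (rule inj_onD[OF B0(2)]) (use 1 2 assms(3) in auto)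
  have "\<mu>2 \<noteq> 0"
  proof
    assume "\<mu>2 = 0"
    then have "sm (\<nu>0 e2) c" using 2 by simp
    then show False using 2 assms by (simp add: sm_def)
  qed
  define l where "l = \<mu>1 / \<mu>2"
  have eq: "a - scale l c = (a - scale \<mu>1 e1) - scale l (c - scale \<mu>2 e2)"
    using \<open>\<mu>2 \<noteq> 0\<close> e by (simp add: l_def V.scale_right_diff_distrib)
  have s1: "sm (\<nu>0 a) (a - scale \<mu>1 e1)" using 1 by simp
  have s2: "sm (\<nu>0 a) (c - scale \<mu>2 e2)" using 1 2 e by simp
  have "sm (\<nu>0 a) (a - scale l c)" unfolding eq by (rule sm_diff[OF s1 sm_scale[OF s2]])
  then show ?thesis by blast
qed

lemma I0: "0 \<in> I" using ideal by (simp add: two_sided_ideal_def)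
lemma Iadd: "x \<in> I \<Longrightarrow> y \<in> I \<Longrightarrow> x + y \<in> I" using ideal by (simp add: two_sided_ideal_def)
lemma Iscale: "x \<in> I \<Longrightarrow> scale c x \<in> I" using ideal by (simp add: two_sided_ideal_def)
lemma Imul: "x \<in> I \<Longrightarrow> a * x \<in> I \<and> x * a \<in> I" using ideal by (simp add: two_sided_ideal_def)
lemma Ineg: "x \<in> I \<Longrightarrow> - x \<in> I" using Iscale[of x "-1"] by simp
lemma Idiff: "x \<in> I \<Longrightarrow> y \<in> I \<Longrightarrow> x - y \<in> I" using Iadd[of x "-y"] Ineg by simp

definition J where "J = \<nu>0 ` (I - {0})"
definition nu where "nu a = min_r r {\<nu>0 (a + f) | f. f \<in> I}"

lemma J_P: "J \<subseteq> P" using v_P by (auto simp: J_def)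

lemma nz_coset: "a \<notin> I \<Longrightarrow> f \<in> I \<Longrightarrow> a + f \<noteq> 0"
proof
  assume "a \<notin> I" "f \<in> I" "a + f = 0"
  then have "a = - f" by (simp add: eq_neg_iff_add_eq_0)
  then show False using Ineg \<open>f \<in> I\<close> \<open>a \<notin> I\<close> by simp
qed

lemma nu_min: assumes "a \<notin> I"
  shows "\<exists>f\<in>I. nu a = \<nu>0 (a + f)" and "\<And>g. g \<in> I \<Longrightarrow> (nu a, \<nu>0 (a + g)) \<in> r"
proof -
  have "{\<nu>0 (a + f) | f. f \<in> I} \<subseteq> P" using nz_coset[OF assms] v_P by auto
  moreover have "{\<nu>0 (a + f) | f. f \<in> I} \<noteq> {}" using I0 by auto
  ultimately have m: "nu a \<in> {\<nu>0 (a + f) | f. f \<in> I}" "\<forall>x\<in>{\<nu>0 (a + f) | f. f \<in> I}. (nu a, x) \<in> r"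
    using minr unfolding nu_def by blast+
  show "\<exists>f\<in>I. nu a = \<nu>0 (a + f)" using m(1) by blast
  show "\<And>g. g \<in> I \<Longrightarrow> (nu a, \<nu>0 (a + g)) \<in> r" using m(2) by blast
qed

lemma nu_notJ: assumes "a \<notin> I" shows "nu a \<notin> J"
proof
  assume "nu a \<in> J"
  then obtain g where g: "g \<in> I" "g \<noteq> 0" "nu a = \<nu>0 g" by (auto simp: J_def)
  obtain f where f: "f \<in> I" "nu a = \<nu>0 (a + f)" using nu_min[OF assms] by blast
  have af: "a + f \<noteq> 0" using nz_coset[OF assms f(1)] .
  obtain l where l: "sm (\<nu>0 (a + f)) (a + f - scale l g)" using L2[OF af g(2)] f g by auto
  have eq: "a + f - scale l g = a + (f - scale l g)" by simp
  have fi: "f - scale l g \<in> I" using f g Idiff Iscale by blast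
  have "a + f - scale l g \<noteq> 0" using nz_coset[OF assms fi] eq by argo
  then have "(\<nu>0 (a + (f - scale l g)), nu a) \<in> r" "\<nu>0 (a + (f - scale l g)) \<noteq> nu a"
    using l f eq by (auto simp: sm_def)
  moreover have "(nu a, \<nu>0 (a + (f - scale l g))) \<in> r" using nu_min(2)[OF assms fi] .
  ultimately show False using r_antisym by blast
qed

lemma nu_P: assumes "a \<notin> I" shows "nu a \<in> P"
proof -
  obtain f where f: "f \<in> I" "nu a = \<nu>0 (a + f)" using nu_min(1)[OF assms] by blast
  show ?thesis using v_P[OF nz_coset[OF assms f(1)]] f(2) by simp
qed

lemma nu_eq: assumes "a \<noteq> 0" "\<nu>0 a \<notin> J" shows "nu a = \<nu>0 a"
proof -
  have aI: "a \<notin> I"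
  proof
    assume "a \<in> I" then have "\<nu>0 a \<in> J" unfolding J_def using assms(1) by blast
    then show False using assms(2) by blast
  qed
  obtain f where f: "f \<in> I" "nu a = \<nu>0 (a + f)" using nu_min(1)[OF aI] by blast
  have le: "(nu a, \<nu>0 a) \<in> r" using nu_min(2)[OF aI I0] by simp
  show ?thesis
  proof (rule ccontr)
    assume ne: "nu a \<noteq> \<nu>0 a"
    have af: "a + f \<noteq> 0" using nz_coset[OF aI f(1)] .
    have ma: "- a \<noteq> 0" using assms(1) by simp
    have va: "\<nu>0 (- a) = \<nu>0 a" using v_neg[OF assms(1)] .
    have lt1: "(\<nu>0 (a + f), \<nu>0 (- a)) \<in> r" using le f(2) va by simp
    have lt2: "\<nu>0 (a + f) \<noteq> \<nu>0 (- a)" using ne f(2) va by simp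
    have s: "a + f + - a \<noteq> 0 \<and> \<nu>0 (a + f + - a) = \<nu>0 (- a)" by (rule SU[OF af ma lt1 lt2])
    have e: "a + f + - a = f" by (simp add: algebra_simps)
    have "f \<noteq> 0" "\<nu>0 f = \<nu>0 a" using s e va by simp_all
    then have "\<nu>0 a \<in> J" unfolding J_def using f(1) by (intro image_eqI[of _ _ f]) auto
    then show False using assms(2) by blast
  qed
qed

lemma nu_coset: assumes "a - b \<in> I" shows "nu a = nu b"
proof -
  have "{\<nu>0 (a + f) | f. f \<in> I} = {\<nu>0 (b + f) | f. f \<in> I}"
  proof (intro equalityI subsetI)
    fix x assume "x \<in> {\<nu>0 (a + f) | f. f \<in> I}"
    then obtain f where f: "f \<in> I" "x = \<nu>0 (a + f)" by blast
    have e: "b + ((a - b) + f) = a + f" by (simp add: algebra_simps)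
    have "x = \<nu>0 (b + ((a - b) + f))" unfolding e by (rule f(2))
    moreover have "(a - b) + f \<in> I" using Iadd assms f(1) by blast
    ultimately show "x \<in> {\<nu>0 (b + f) | f. f \<in> I}" by blast
  next
    fix x assume "x \<in> {\<nu>0 (b + f) | f. f \<in> I}"
    then obtain f where f: "f \<in> I" "x = \<nu>0 (b + f)" by blast
    have e: "a + (f - (a - b)) = b + f" by (simp add: algebra_simps)
    have "x = \<nu>0 (a + (f - (a - b)))" unfolding e by (rule f(2))
    moreover have "f - (a - b) \<in> I" using Idiff assms f(1) by blast
    ultimately show "x \<in> {\<nu>0 (a + f) | f. f \<in> I}" by blast
  qed
  then show ?thesis by (simp add: nu_def)
qed

lemma nu_scale: assumes "c \<noteq> 0" "a \<notin> I" shows "nu (scale c a) = nu a"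
proof -
  have "{\<nu>0 (scale c a + f) | f. f \<in> I} = {\<nu>0 (a + f) | f. f \<in> I}"
  proof (intro equalityI subsetI)
    fix x assume "x \<in> {\<nu>0 (scale c a + f) | f. f \<in> I}"
    then obtain f where f: "f \<in> I" "x = \<nu>0 (scale c a + f)" by blast
    have fi: "scale (inverse c) f \<in> I" using f Iscale by blast
    have eq: "scale c (a + scale (inverse c) f) = scale c a + f"
      using assms(1) by (simp add: V.scale_right_distrib)
    have nz: "a + scale (inverse c) f \<noteq> 0" using nz_coset[OF assms(2) fi] .
    have "x = \<nu>0 (scale c (a + scale (inverse c) f))" unfolding eq by (rule f(2))
    also have "\<dots> = \<nu>0 (a + scale (inverse c) f)" using v_scale[OF assms(1) nz] .
    finally show "x \<in> {\<nu>0 (a + f) | f. f \<in> I}" using fi by blast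
  next
    fix x assume "x \<in> {\<nu>0 (a + f) | f. f \<in> I}"
    then obtain f where f: "f \<in> I" "x = \<nu>0 (a + f)" by blast
    have nz: "a + f \<noteq> 0" using nz_coset[OF assms(2) f(1)] .
    have eq: "scale c (a + f) = scale c a + scale c f" by (simp add: V.scale_right_distrib)
    have "x = \<nu>0 (scale c (a + f))" using f(2) v_scale[OF assms(1) nz] by simp
    also have "\<dots> = \<nu>0 (scale c a + scale c f)" unfolding eq ..
    finally show "x \<in> {\<nu>0 (scale c a + f) | f. f \<in> I}" using f(1) Iscale by blast
  qed
  then show ?thesis by (simp add: nu_def)
qed

lemma nu_add: assumes "a \<notin> I" "b \<notin> I" "a + b \<notin> I"
  shows "(nu (a + b), max_r r (nu a) (nu b)) \<in> r"
proof -
  obtain f where f: "f \<in> I" "nu a = \<nu>0 (a + f)" using nu_min[OF assms(1)] by blast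
  obtain g where g: "g \<in> I" "nu b = \<nu>0 (b + g)" using nu_min[OF assms(2)] by blast
  have fg: "f + g \<in> I" using f g Iadd by blast
  have eq: "a + b + (f + g) = (a + f) + (b + g)" by (simp add: algebra_simps)
  have 1: "(nu (a + b), \<nu>0 ((a + f) + (b + g))) \<in> r" using nu_min(2)[OF assms(3) fg] unfolding eq .
  have nz: "(a + f) + (b + g) \<noteq> 0" using nz_coset[OF assms(3) fg] unfolding eq .
  have 2: "(\<nu>0 ((a + f) + (b + g)), max_r r (\<nu>0 (a + f)) (\<nu>0 (b + g))) \<in> r"
    by (rule v_add[OF nz_coset[OF assms(1) f(1)] nz_coset[OF assms(2) g(1)] nz])
  have "(nu (a + b), max_r r (\<nu>0 (a + f)) (\<nu>0 (b + g))) \<in> r" by (rule r_trans[OF 1 2])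
  then show ?thesis unfolding f(2) g(2) .
qed

lemma nu_mult: assumes "a \<notin> I" "b \<notin> I" "ps_op (nu a) (nu b) = Some x" "x \<notin> J"
  shows "a * b \<notin> I \<and> nu (a * b) = x"
proof -
  obtain f where f: "f \<in> I" "nu a = \<nu>0 (a + f)" using nu_min[OF assms(1)] by blast
  obtain g where g: "g \<in> I" "nu b = \<nu>0 (b + g)" using nu_min[OF assms(2)] by blast
  define h where "h = (a + f) * (b + g)"
  have ps: "ps_op (\<nu>0 (a + f)) (\<nu>0 (b + g)) = Some x" using assms(3) unfolding f(2) g(2) .
  have h: "h \<noteq> 0" "\<nu>0 h = x"
    using v_mult[OF nz_coset[OF assms(1) f(1)] nz_coset[OF assms(2) g(1)] ps] unfolding h_def by auto
  define k where "k = a * g + (f * b + f * g)"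
  have hk: "h = a * b + k" unfolding h_def k_def by (simp add: distrib_left distrib_right add.assoc)
  have k1: "a * g \<in> I" using Imul[OF g(1), of a] by (rule conjunct1)
  have k2: "f * b \<in> I" using Imul[OF f(1), of b] by (rule conjunct2)
  have k3: "f * g \<in> I" using Imul[OF f(1), of g] by (rule conjunct2)
  have kI: "k \<in> I" unfolding k_def by (rule Iadd[OF k1 Iadd[OF k2 k3]])
  have abI: "a * b \<notin> I"
  proof
    assume "a * b \<in> I"
    then have "h \<in> I" unfolding hk using kI by (rule Iadd)
    then have "\<nu>0 h \<in> J" using h(1) unfolding J_def by (intro imageI) simp
    then have "x \<in> J" using h(2) by simp
    then show False using assms(4) by blast
  qed
  have "a * b - h = - k" unfolding hk by simp
  then have "a * b - h \<in> I" using kI Ineg by simp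
  then have "nu (a * b) = nu h" by (rule nu_coset)
  also have "\<dots> = x" using nu_eq[OF h(1)] h(2) assms(4) by simp
  finally show ?thesis using abI by simp
qed

lemma compJ: "comp_J J ps_op c d = Some x \<longleftrightarrow> ps_op c d = Some x \<and> x \<notin> J"
  by (cases "ps_op c d") (auto simp: comp_J_def)

lemma psg: "partial_semigroup P ps_op" using ops by (simp add: ordered_partial_semigroup_def)
lemma ps_closed: assumes "c \<in> P" "d \<in> P" "ps_op c d = Some e" shows "e \<in> P"
proof -
  have "\<forall>c\<in>P. \<forall>d\<in>P. \<forall>e. ps_op c d = Some e \<longrightarrow> e \<in> P"
    using psg unfolding partial_semigroup_def by (rule conjunct1)
  then show ?thesis using assms by blast
qed
lemma ps_assoc: assumes "c \<in> P" "c' \<in> P" "c'' \<in> P" shows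
   "Option.bind (ps_op c c') (\<lambda>x. ps_op x c'') = Option.bind (ps_op c' c'') (\<lambda>y. ps_op c y)"
proof -
  have "\<forall>c\<in>P. \<forall>c'\<in>P. \<forall>c''\<in>P.
        Option.bind (ps_op c c') (\<lambda>x. ps_op x c'') = Option.bind (ps_op c' c'') (\<lambda>y. ps_op c y)"
    using psg unfolding partial_semigroup_def by (rule conjunct2)
  then show ?thesis using assms by blast
qed

lemma surjE: assumes "c \<in> P" obtains a where "a \<noteq> 0" "c = \<nu>0 a"
proof -
  have "c \<in> \<nu>0 ` (UNIV - {0})" using assms unfolding surj .
  then obtain a where "a \<in> UNIV - {0}" "c = \<nu>0 a" by (rule imageE)
  then show ?thesis using that by blast
qed

lemma J_ideal: "ps_ideal P ps_op J"
  unfolding ps_ideal_def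
proof (intro conjI J_P ballI allI impI)
  fix c d x assume c: "c \<in> P" and d: "d \<in> J"
  obtain a where a: "a \<noteq> 0" "c = \<nu>0 a" using surjE[OF c] .
  obtain f where f: "f \<in> I" "f \<noteq> 0" "d = \<nu>0 f" using d unfolding J_def by (rule imageE) blast
  { assume "ps_op c d = Some x"
    then have "ps_op (\<nu>0 a) (\<nu>0 f) = Some x" using a f by simp
    from v_mult[OF a(1) f(2) this] have m: "a * f \<noteq> 0" "\<nu>0 (a * f) = x" by auto
    have "a * f \<in> I" using Imul[OF f(1), of a] by (rule conjunct1)
    then have "\<nu>0 (a * f) \<in> J" using m(1) unfolding J_def by (intro imageI) simp
    then show "x \<in> J" using m(2) by simp }
  { assume "ps_op d c = Some x"
    then have "ps_op (\<nu>0 f) (\<nu>0 a) = Some x" using a f by simp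
    from v_mult[OF f(2) a(1) this] have m: "f * a \<noteq> 0" "\<nu>0 (f * a) = x" by auto
    have "f * a \<in> I" using Imul[OF f(1), of a] by (rule conjunct2)
    then have "\<nu>0 (f * a) \<in> J" using m(1) unfolding J_def by (intro imageI) simp
    then show "x \<in> J" using m(2) by simp }
qed

lemma J_idealD: "c \<in> P \<Longrightarrow> d \<in> J \<Longrightarrow> ps_op c d = Some x \<Longrightarrow> x \<in> J"
   "c \<in> P \<Longrightarrow> d \<in> J \<Longrightarrow> ps_op d c = Some x \<Longrightarrow> x \<in> J"
  using J_ideal unfolding ps_ideal_def by blast+

lemma cJ_def2: "comp_J J ps_op c d = (case ps_op c d of None \<Rightarrow> None | Some y \<Rightarrow> if y \<in> J then None else Some y)"
  by (simp add: comp_J_def)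

lemma lhs_eq: assumes "c \<in> P" "c' \<in> P" "c'' \<in> P"
  shows "Option.bind (comp_J J ps_op c c') (\<lambda>x. comp_J J ps_op x c'') =
    (case Option.bind (ps_op c c') (\<lambda>x. ps_op x c'') of None \<Rightarrow> None | Some y \<Rightarrow> if y \<in> J then None else Some y)"
proof (cases "ps_op c c'")
  case None then show ?thesis by (simp add: comp_J_def)
next
  case (Some x)
  note sx = Some
  show ?thesis
  proof (cases "x \<in> J")
    case True
    have L: "comp_J J ps_op c c' = None" using sx True by (simp add: comp_J_def)
    show ?thesis
    proof (cases "ps_op x c''")
      case None then show ?thesis using L sx by simp
    next
      case (Some y)
      then have "y \<in> J" using J_idealD(2)[OF assms(3) True] by blast
      then show ?thesis using L sx Some by simp
    qed
  next
    case False
    have L: "comp_J J ps_op c c' = Some x" using sx False by (simp add: comp_J_def)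
    show ?thesis using L sx by (simp add: cJ_def2)
  qed
qed

lemma rhs_eq: assumes "c \<in> P" "c' \<in> P" "c'' \<in> P"
  shows "Option.bind (comp_J J ps_op c' c'') (\<lambda>y. comp_J J ps_op c y) =
    (case Option.bind (ps_op c' c'') (\<lambda>y. ps_op c y) of None \<Rightarrow> None | Some y \<Rightarrow> if y \<in> J then None else Some y)"
proof (cases "ps_op c' c''")
  case None then show ?thesis by (simp add: comp_J_def)
next
  case (Some x)
  note sx = Some
  show ?thesis
  proof (cases "x \<in> J")
    case True
    have L: "comp_J J ps_op c' c'' = None" using sx True by (simp add: comp_J_def)
    show ?thesis
    proof (cases "ps_op c x")
      case None then show ?thesis using L sx by simp
    next
      case (Some y)
      then have "y \<in> J" using J_idealD(1)[OF assms(1) True] by blast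
      then show ?thesis using L sx Some by simp
    qed
  next
    case False
    have L: "comp_J J ps_op c' c'' = Some x" using sx False by (simp add: comp_J_def)
    show ?thesis using L sx by (simp add: cJ_def2)
  qed
qed

lemma opm: "(c, d) \<in> r \<Longrightarrow> (c', d') \<in> r \<Longrightarrow> ps_op c c' = Some x \<Longrightarrow> ps_op d d' = Some y \<Longrightarrow> (x, y) \<in> r"
proof -
  have "\<forall>c d c' d' x y. (c, d) \<in> r \<longrightarrow> (c', d') \<in> r \<longrightarrow> ps_op c c' = Some x \<longrightarrow> ps_op d d' = Some y
        \<longrightarrow> (x, y) \<in> r" using ops unfolding ordered_partial_semigroup_def by (rule conjunct2[OF conjunct2])
  then show "(c, d) \<in> r \<Longrightarrow> (c', d') \<in> r \<Longrightarrow> ps_op c c' = Some x \<Longrightarrow> ps_op d d' = Some y \<Longrightarrow> (x, y) \<in> r"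
    by blast
qed

lemma compJD: "comp_J J ps_op c d = Some x \<Longrightarrow> ps_op c d = Some x" "comp_J J ps_op c d = Some x \<Longrightarrow> x \<notin> J"
  using compJ by blast+

lemma wops_J: "well_ordered_partial_semigroup (P - J) (comp_J J ps_op) (Restr r (P - J))"
proof -
  have ps: "partial_semigroup (P - J) (comp_J J ps_op)"
    unfolding partial_semigroup_def
  proof (intro conjI ballI allI impI)
    fix c d e assume a: "c \<in> P - J" "d \<in> P - J" "comp_J J ps_op c d = Some e"
    have "e \<in> P" using ps_closed[OF _ _ compJD(1)[OF a(3)]] a(1,2) by blast
    then show "e \<in> P - J" using compJD(2)[OF a(3)] by blast
  next
    fix c c' c'' assume a: "c \<in> P - J" "c' \<in> P - J" "c'' \<in> P - J"
    then have a': "c \<in> P" "c' \<in> P" "c'' \<in> P" by auto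
    show "Option.bind (comp_J J ps_op c c') (\<lambda>x. comp_J J ps_op x c'') =
         Option.bind (comp_J J ps_op c' c'') (comp_J J ps_op c)"
      unfolding lhs_eq[OF a'] rhs_eq[OF a'] ps_assoc[OF a'] by (rule refl)
  qed
  have l1: "Restr r (P - J) \<subseteq> (P - J) \<times> (P - J)" by blast
  have l2: "refl_on (P - J) (Restr r (P - J))" unfolding refl_on_def using r_refl by blast
  have l3: "trans (Restr r (P - J))" unfolding trans_def using r_trans by blast
  have l4: "antisym (Restr r (P - J))" unfolding antisym_def using r_antisym by blast
  have l5: "total_on (P - J) (Restr r (P - J))" unfolding total_on_def using r_total by blast
  have lo: "linear_order_on (P - J) (Restr r (P - J))"
    unfolding order_on_defs using l1 l2 l3 l4 l5 by blast
  have comp: "\<forall>c d c' d' x y. (c, d) \<in> Restr r (P - J) \<longrightarrow> (c', d') \<in> Restr r (P - J) \<longrightarrow>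
      comp_J J ps_op c c' = Some x \<longrightarrow> comp_J J ps_op d d' = Some y \<longrightarrow> (x, y) \<in> Restr r (P - J)"
  proof (intro allI impI)
    fix c d c' d' x y
    assume a: "(c, d) \<in> Restr r (P - J)" "(c', d') \<in> Restr r (P - J)"
      "comp_J J ps_op c c' = Some x" "comp_J J ps_op d d' = Some y"
    have xy: "(x, y) \<in> r" using opm[OF _ _ compJD(1)[OF a(3)] compJD(1)[OF a(4)]] a(1,2) by blast
    have "x \<in> P" using ps_closed[OF _ _ compJD(1)[OF a(3)]] a(1,2) by blast
    moreover have "y \<in> P" using ps_closed[OF _ _ compJD(1)[OF a(4)]] a(1,2) by blast
    ultimately show "(x, y) \<in> Restr r (P - J)" using xy compJD(2)[OF a(3)] compJD(2)[OF a(4)] by blast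
  qed
  have wf: "wf (Restr r (P - J) - Id)" by (rule wf_subset[OF r_wf]) blast
  show ?thesis unfolding well_ordered_partial_semigroup_def ordered_partial_semigroup_def well_order_on_def
    using ps lo comp wf by blast
qed

definition rep where "rep p = (SOME a. a \<noteq> 0 \<and> \<nu>0 a = p)"

lemma rep: "p \<in> P \<Longrightarrow> rep p \<noteq> 0 \<and> \<nu>0 (rep p) = p"
proof -
  assume "p \<in> P"
  then have "\<exists>a. a \<noteq> 0 \<and> \<nu>0 a = p" using surj by auto
  then show ?thesis unfolding rep_def by (rule someI_ex)
qed

definition QB where "QB = rep ` (P - J)"

lemma QB_props: "b \<in> QB \<Longrightarrow> b \<noteq> 0 \<and> b \<notin> I \<and> \<nu>0 b \<in> P - J \<and> nu b = \<nu>0 b \<and> b = rep (\<nu>0 b)"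
proof -
  assume "b \<in> QB"
  then obtain p where p: "p \<in> P - J" "b = rep p" by (auto simp: QB_def)
  have pP: "p \<in> P" using p by blast
  have b: "b \<noteq> 0" "\<nu>0 b = p" using rep[OF pP] p(2) by auto
  have bI: "b \<notin> I"
  proof
    assume "b \<in> I"
    then have "\<nu>0 b \<in> J" using b(1) unfolding J_def by blast
    then show False using b(2) p(1) by blast
  qed
  have "nu b = \<nu>0 b" using nu_eq[OF b(1)] b(2) p(1) by blast
  then show ?thesis using b bI p by simp
qed

lemma QB_inj: assumes "b \<in> QB" "b' \<in> QB" "\<nu>0 b = \<nu>0 b'" shows "b = b'"
proof -
  have "b = rep (\<nu>0 b)" "b' = rep (\<nu>0 b')" using QB_props assms(1,2) by blast+
  then show ?thesis using assms(3) by simp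
qed

lemma QB_indep: assumes "finite S" "S \<subseteq> QB" "(\<Sum>b\<in>S. scale (u b) b) \<in> I"
  shows "\<forall>b\<in>S. u b = 0"
proof (rule ccontr)
  assume "\<not> (\<forall>b\<in>S. u b = 0)"
  define S' where "S' = {b\<in>S. u b \<noteq> 0}"
  have ne: "S' \<noteq> {}" "finite S'" using \<open>\<not> _\<close> assms(1) by (auto simp: S'_def)
  have "\<forall>b\<in>S'. \<nu>0 b \<in> P" using QB_props assms(2) by (auto simp: S'_def)
  then obtain m where m: "m \<in> S'" "\<forall>b\<in>S'. (\<nu>0 b, \<nu>0 m) \<in> r" using maxex[OF ne(2,1)] by blast
  have mS: "m \<in> S" "u m \<noteq> 0" using m by (auto simp: S'_def)
  have mQ: "m \<in> QB" using mS assms(2) by blast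
  have gm: "scale (u m) m \<noteq> 0" "\<nu>0 (scale (u m) m) = \<nu>0 m" using mS mQ QB_props v_scale by auto
  have "\<forall>a\<in>S - {m}. sm (\<nu>0 (scale (u m) m)) (scale (u a) a)"
  proof
    fix a assume a: "a \<in> S - {m}"
    show "sm (\<nu>0 (scale (u m) m)) (scale (u a) a)"
    proof (cases "u a = 0")
      case True then show ?thesis by (simp add: sm_def)
    next
      case False
      then have aS': "a \<in> S'" using a by (simp add: S'_def)
      have aQ: "a \<in> QB" using a assms(2) by blast
      have "\<nu>0 a \<noteq> \<nu>0 m" using QB_inj[OF aQ mQ] a by blast
      then show ?thesis using aS' m gm False aQ QB_props v_scale by (simp add: sm_def)
    qed
  qed
  from lead[OF assms(1) mS(1), of "\<lambda>b. scale (u b) b"] this gm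
  have "(\<Sum>b\<in>S. scale (u b) b) \<noteq> 0" "\<nu>0 (\<Sum>b\<in>S. scale (u b) b) = \<nu>0 m" by auto
  then have "\<nu>0 m \<in> J" using assms(3) unfolding J_def
    by (intro image_eqI[of _ _ "\<Sum>b\<in>S. scale (u b) b"]) auto
  then show False using QB_props[OF mQ] by simp
qed

definition T where "T = {x. \<exists>s\<in>V.span QB. x - s \<in> I}"

lemma T_add: "x \<in> T \<Longrightarrow> y \<in> T \<Longrightarrow> x + y \<in> T"
proof -
  assume "x \<in> T" "y \<in> T"
  then obtain s t where "s \<in> V.span QB" "x - s \<in> I" "t \<in> V.span QB" "y - t \<in> I" by (auto simp: T_def)
  moreover have "(x + y) - (s + t) = (x - s) + (y - t)" by simp
  ultimately show ?thesis unfolding T_def using V.span_add Iadd by (metis (mono_tags, lifting) mem_Collect_eq)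
qed

lemma T_scale: "x \<in> T \<Longrightarrow> scale c x \<in> T"
proof -
  assume "x \<in> T"
  then obtain s where "s \<in> V.span QB" "x - s \<in> I" by (auto simp: T_def)
  moreover have "scale c x - scale c s = scale c (x - s)" by (simp add: V.scale_right_diff_distrib)
  ultimately show ?thesis unfolding T_def using V.span_scale Iscale by (metis (mono_tags, lifting) mem_Collect_eq)
qed

lemma T_I: "x \<in> I \<Longrightarrow> x \<in> T" unfolding T_def using V.span_zero by force
lemma T_QB: "x \<in> QB \<Longrightarrow> x \<in> T" unfolding T_def using V.span_base I0 by force

lemma T_all: "x \<in> T"
proof -
  have "\<forall>a. a \<noteq> 0 \<longrightarrow> \<nu>0 a = p \<longrightarrow> a \<in> T" for p
  proof (induction p rule: wf_induct[OF r_wf])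
    case (1 p)
    show ?case
    proof (intro allI impI)
      fix a assume a: "a \<noteq> 0" "\<nu>0 a = p"
      have pP: "p \<in> P" using a v_P by blast
      obtain c where c: "c \<in> T" "c \<noteq> 0" "\<nu>0 c = p"
      proof (cases "p \<in> J")
        case True
        then obtain g where "g \<in> I" "g \<noteq> 0" "\<nu>0 g = p" by (auto simp: J_def)
        then show ?thesis using that T_I by blast
      next
        case False
        then have "rep p \<in> QB" using pP by (simp add: QB_def)
        then show ?thesis using that T_QB rep pP by blast
      qed
      obtain l where l: "sm p (a - scale l c)" using L2[OF a(1) c(2)] a c by auto
      have "a - scale l c \<in> T"
      proof (cases "a - scale l c = 0")
        case True then show ?thesis using T_I I0 by simp
      next
        case False
        then have "(\<nu>0 (a - scale l c), p) \<in> r - Id" using l by (auto simp: sm_def)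
        then show ?thesis using 1 False by blast
      qed
      moreover have "a = (a - scale l c) + scale l c" by simp
      ultimately show "a \<in> T" using T_add T_scale c(1) by metis
    qed
  qed
  then show ?thesis using T_I I0 by (cases "x = 0") auto
qed

lemma QB_basis: "quotient_basis scale I QB"
proof -
  have 1: "\<forall>b\<in>QB. \<forall>b'\<in>QB. b - b' \<in> I \<longrightarrow> b = b'"
  proof (intro ballI impI)
    fix b b' assume b: "b \<in> QB" "b' \<in> QB" "b - b' \<in> I"
    have "nu b = nu b'" using nu_coset[OF b(3)] .
    moreover have "nu b = \<nu>0 b" "nu b' = \<nu>0 b'" using QB_props b(1,2) by blast+
    ultimately show "b = b'" using QB_inj[OF b(1,2)] by simp
  qed
  have 2: "\<forall>S u. finite S \<longrightarrow> S \<subseteq> QB \<longrightarrow> (\<Sum>b\<in>S. scale (u b) b) \<in> I \<longrightarrow> (\<forall>b\<in>S. u b = 0)"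
    using QB_indep by blast
  have 3: "\<forall>a. \<exists>S u. finite S \<and> S \<subseteq> QB \<and> a - (\<Sum>b\<in>S. scale (u b) b) \<in> I"
  proof
    fix a
    obtain s where s: "s \<in> V.span QB" "a - s \<in> I" using T_all[of a] unfolding T_def by blast
    then obtain S u where "finite S" "S \<subseteq> QB" "s = (\<Sum>b\<in>S. scale (u b) b)"
      unfolding V.span_explicit by blast
    then show "\<exists>S u. finite S \<and> S \<subseteq> QB \<and> a - (\<Sum>b\<in>S. scale (u b) b) \<in> I" using s(2) by blast
  qed
  show ?thesis unfolding quotient_basis_def using 1 2 3 by blast
qed

lemma maxR: "x \<in> P - J \<Longrightarrow> y \<in> P - J \<Longrightarrow> max_r (Restr r (P - J)) x y = max_r r x y"
  by (simp add: max_r_def)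

lemma main: "ps_ideal P ps_op J
    \<and> well_ordered_partial_semigroup (P - J) (comp_J J ps_op) (Restr r (P - J))
    \<and> injective_quotient_valuation scale I (P - J) (comp_J J ps_op) (Restr r (P - J)) nu
    \<and> nu ` (UNIV - I) = P - J
    \<and> (\<forall>a. a \<noteq> 0 \<longrightarrow> \<nu>0 a \<notin> J \<longrightarrow> nu a = \<nu>0 a)"
proof -
  have PJ: "a \<notin> I \<Longrightarrow> nu a \<in> P - J" for a using nu_P nu_notJ by blast
  have qv: "quotient_valuation scale I (P - J) (comp_J J ps_op) (Restr r (P - J)) nu"
    unfolding quotient_valuation_def
  proof (intro conjI allI impI)
    fix a b assume "a \<notin> I" "a - b \<in> I" then show "nu a = nu b" using nu_coset by blast
  next
    fix a assume "a \<notin> I" then show "nu a \<in> P - J" using PJ by blast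
  next
    fix c :: 'k and a assume "c \<noteq> 0" "a \<notin> I" then show "nu (scale c a) = nu a" using nu_scale by blast
  next
    fix a b assume ab: "a \<notin> I" "b \<notin> I" "a + b \<notin> I"
    have "max_r r (nu a) (nu b) \<in> P - J" using max_r_cases PJ ab by metis
    then show "(nu (a + b), max_r (Restr r (P - J)) (nu a) (nu b)) \<in> Restr r (P - J)"
      using nu_add[OF ab] maxR PJ ab by simp
  next
    fix a b x assume ab: "a \<notin> I" "b \<notin> I" "comp_J J ps_op (nu a) (nu b) = Some x"
    then show "a * b \<notin> I" using nu_mult compJ by blast
  next
    fix a b x assume ab: "a \<notin> I" "b \<notin> I" "comp_J J ps_op (nu a) (nu b) = Some x"
    then show "nu (a * b) = x" using nu_mult compJ by blast
  qed
  have inj: "inj_on nu QB"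
  proof (rule inj_onI)
    fix x y assume "x \<in> QB" "y \<in> QB" "nu x = nu y"
    then show "x = y" using QB_props[of x] QB_props[of y] QB_inj[of x y] by simp
  qed
  have im: "nu ` (UNIV - I) = P - J"
  proof
    show "nu ` (UNIV - I) \<subseteq> P - J" using PJ by blast
  next
    show "P - J \<subseteq> nu ` (UNIV - I)"
    proof
      fix p assume p: "p \<in> P - J"
      then have "rep p \<in> QB" by (simp add: QB_def)
      then have "rep p \<notin> I" "nu (rep p) = p" using QB_props rep p by auto
      then show "p \<in> nu ` (UNIV - I)" by force
    qed
  qed
  show ?thesis using J_ideal wops_J qv QB_basis inj im nu_eq
    by (auto simp: injective_quotient_valuation_def)
qed


lemma main2: "ps_ideal P ps_op (\<nu>0 ` (I - {0}))
    \<and> well_ordered_partial_semigroup (P - \<nu>0 ` (I - {0})) (comp_J (\<nu>0 ` (I - {0})) ps_op) (Restr r (P - \<nu>0 ` (I - {0})))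
    \<and> injective_quotient_valuation scale I (P - \<nu>0 ` (I - {0})) (comp_J (\<nu>0 ` (I - {0})) ps_op) (Restr r (P - \<nu>0 ` (I - {0}))) (\<lambda>a. min_r r {\<nu>0 (a + f) | f. f \<in> I})
    \<and> (\<lambda>a. min_r r {\<nu>0 (a + f) | f. f \<in> I}) ` (UNIV - I) = P - \<nu>0 ` (I - {0})
    \<and> (\<forall>a. a \<noteq> 0 \<longrightarrow> \<nu>0 a \<notin> \<nu>0 ` (I - {0}) \<longrightarrow> (\<lambda>a. min_r r {\<nu>0 (a + f) | f. f \<in> I}) a = \<nu>0 a)"
proof -
  have e: "nu = (\<lambda>a. min_r r {\<nu>0 (a + f) | f. f \<in> I})" by (rule ext) (simp add: nu_def)
  show ?thesis using main unfolding e J_def .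
qed

end

theorem mainTheorem9:
  fixes scale :: "'k::field \<Rightarrow> 'a::ring_1 \<Rightarrow> 'a"
    and P :: "'p set" and ps_op :: "'p \<Rightarrow> 'p \<Rightarrow> 'p option" and r :: "('p \<times> 'p) set"
    and \<nu>0 :: "'a \<Rightarrow> 'p" and I :: "'a set"
  assumes alg: "k_algebra scale"
    and P_wo: "well_ordered_partial_semigroup P ps_op r"
    and val: "injective_valuation scale P ps_op r \<nu>0"
    and surj: "\<nu>0 ` (UNIV - {0}) = P"
    and ideal: "two_sided_ideal scale I"
  defines "J \<equiv> \<nu>0 ` (I - {0})"
    and "\<nu> \<equiv> (\<lambda>a. min_r r {\<nu>0 (a + f) | f. f \<in> I})"
  shows "ps_ideal P ps_op J
    \<and> well_ordered_partial_semigroup (P - J) (comp_J J ps_op) (Restr r (P - J))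
    \<and> injective_quotient_valuation scale I (P - J) (comp_J J ps_op) (Restr r (P - J)) \<nu>
    \<and> \<nu> ` (UNIV - I) = P - J
    \<and> (\<forall>a. a \<noteq> 0 \<longrightarrow> \<nu>0 a \<notin> J \<longrightarrow> \<nu> a = \<nu>0 a)"
  unfolding J_def \<nu>_def
  by (rule QS.main2[OF QS.intro[OF alg P_wo val surj ideal]])

end
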